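(* Let $k\ge1$, let $\mathcal{X}\subset\mathbb{R}^d$ be locally finite, and let $G_k(\mathcal{X})$ be its $k$-nearest-neighbor graph. Let $\mathrm{Cone}_*=\{x\in\mathbb{R}^d:\langle x,\mathbf{1}\rangle/|x|\ge\sqrt3/2\}$ with $\mathbf{1}=(1,0,\dots,0)$, and for each $x\in\mathbb{R}^d$ let $\mathrm{Cone}_1(x),\dots,\mathrm{Cone}_N(x)$ be a fixed finite collection of translated and rotated copies of $\mathrm{Cone}_*$, each with apex $x$, covering $\mathbb{R}^d$. For $x\in\mathcal{X}$ define \[ R(x;\mathcal{X})=2\inf\{r>0:|\mathcal{X}\cap B_r(x)\cap\mathrm{Cone}_i(x)|\ge k+1\ \text{for all }1\le i\le N\}. \] Then $\deg(x;\mathcal{X})=\deg(x;\mathcal{X}\cap B_{R(x;\mathcal{X})}(x))$, and with $K=kN$, $k\le\deg(x;\mathcal{X})\le K$.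
   Context: $G_k(\mathcal{X})$ connects $x_1,x_2\in\mathcal{X}$ if $x_2$ is among the $k$ nearest neighbors of $x_1$ or vice versa; $\deg(x;\mathcal{X})$ is the degree of $x$ in $G_k(\mathcal{X})$. $B_r(x)$ is the closed Euclidean ball. $\mathrm{Cone}_*$ is a cone with apex at the origin and opening angle $\pi/3$. *)

theory Defs
  imports "HOL-Analysis.Analysis"
begin

definition locally_finite_set :: "'a::metric_space set \<Rightarrow> bool" where
  "locally_finite_set X \<longleftrightarrow> (\<forall>S. bounded S \<longrightarrow> finite (X \<inter> S))"

definition is_knn :: "nat \<Rightarrow> 'a::metric_space set \<Rightarrow> 'a \<Rightarrow> 'a \<Rightarrow> bool" where
  "is_knn k X x y \<longleftrightarrow> x \<in> X \<and> y \<in> X \<and> y \<noteq> x \<and>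
     card {z \<in> X - {x}. dist x z < dist x y} < k"

definition knn_adj :: "nat \<Rightarrow> 'a::metric_space set \<Rightarrow> 'a \<Rightarrow> 'a \<Rightarrow> bool" where
  "knn_adj k X x y \<longleftrightarrow> x \<noteq> y \<and> (is_knn k X x y \<or> is_knn k X y x)"

definition knn_deg :: "nat \<Rightarrow> 'a::metric_space set \<Rightarrow> 'a \<Rightarrow> nat" where
  "knn_deg k X x = card {y \<in> X. knn_adj k X x y}"

definition first_axis :: "real^'n" where
  "first_axis = axis (SOME i. True) 1"

text \<open>Cone_*: apex at the origin (included), opening angle pi/3.\<close>
definition cone_star :: "(real^'n) set" where
  "cone_star = {0} \<union> {v. v \<noteq> 0 \<and> inner v first_axis / norm v \<ge> sqrt 3 / 2}"

definition is_rotation :: "(real^'n \<Rightarrow> real^'n) \<Rightarrow> bool" where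
  "is_rotation f \<longleftrightarrow> orthogonal_transformation f \<and> det (matrix f) = 1"

definition cone_at :: "(real^'n \<Rightarrow> real^'n) \<Rightarrow> real^'n \<Rightarrow> (real^'n) set" where
  "cone_at rho x = (\<lambda>v. x + rho v) ` cone_star"

text \<open>R(x;X) as an extended real (infimum of the empty set is +infinity).\<close>
definition knn_R :: "nat \<Rightarrow> nat \<Rightarrow> (nat \<Rightarrow> real^'n \<Rightarrow> real^'n) \<Rightarrow> (real^'n) set \<Rightarrow> real^'n \<Rightarrow> ereal" where
  "knn_R k N rho X x = 2 * Inf {ereal r | r. r > 0 \<and>
      (\<forall>i\<in>{1..N}. k + 1 \<le> card (X \<inter> cball x r \<inter> cone_at (rho i) x))}"

definition ecball :: "'a::metric_space \<Rightarrow> ereal \<Rightarrow> 'a set" where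
  "ecball x R = {y. ereal (dist x y) \<le> R}"

end

theory Submission imports Defs begin

lemma cone_inner:
  fixes v w :: "real^'n"
  assumes "v \<in> cone_star" "w \<in> cone_star"
  shows "norm v * norm w \<le> 2 * inner v w"
proof (cases "v = 0 \<or> w = 0")
  case True then show ?thesis by auto
next
  case False
  define e :: "real^'n" where "e = first_axis"
  have ne: "norm e = 1" unfolding e_def first_axis_def by simp
  have ee: "e \<bullet> e = 1" using ne by (simp add: dot_square_norm power2_eq_square)
  define c where "c = sqrt 3 / 2"
  have c2: "c * c = 3/4" unfolding c_def by (simp add: power2_eq_square[symmetric] power_divide)
  have c0: "c \<ge> 0" unfolding c_def by simp
  define a where "a = v \<bullet> e"
  define b where "b = w \<bullet> e"
  have nv: "norm v > 0" "norm w > 0" using False by auto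
  have av: "a \<ge> c * norm v" using assms False nv unfolding cone_star_def a_def e_def c_def
    by (auto simp: field_simps)
  have bw: "b \<ge> c * norm w" using assms False nv unfolding cone_star_def b_def e_def c_def
    by (auto simp: field_simps)
  define p where "p = v - a *\<^sub>R e"
  define q where "q = w - b *\<^sub>R e"
  have vw: "v \<bullet> w = a * b + p \<bullet> q"
    unfolding p_def q_def a_def b_def using ee
    by (simp add: inner_diff_left inner_diff_right inner_commute algebra_simps)
  have pp: "norm p ^ 2 = norm v ^ 2 - a ^ 2"
  proof -
    have "p \<bullet> p = v \<bullet> v - a ^ 2"
      unfolding p_def a_def using ee
      by (simp add: inner_diff_left inner_diff_right inner_commute algebra_simps power2_eq_square)
    then show ?thesis by (simp add: power2_norm_eq_inner)
  qed
  have qq: "norm q ^ 2 = norm w ^ 2 - b ^ 2"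
  proof -
    have "q \<bullet> q = w \<bullet> w - b ^ 2"
      unfolding q_def b_def using ee
      by (simp add: inner_diff_left inner_diff_right inner_commute algebra_simps power2_eq_square)
    then show ?thesis by (simp add: power2_norm_eq_inner)
  qed
  have a2: "a ^ 2 \<ge> 3/4 * norm v ^ 2"
  proof -
    have "(c * norm v) ^ 2 \<le> a ^ 2" using av c0 nv by (intro power_mono) auto
    moreover have "(c * norm v) ^ 2 = (c*c) * norm v ^ 2" by (simp add: power2_eq_square)
    ultimately show ?thesis unfolding c2 by simp
  qed
  have b2: "b ^ 2 \<ge> 3/4 * norm w ^ 2"
  proof -
    have "(c * norm w) ^ 2 \<le> b ^ 2" using bw c0 nv by (intro power_mono) auto
    moreover have "(c * norm w) ^ 2 = (c*c) * norm w ^ 2" by (simp add: power2_eq_square)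
    ultimately show ?thesis unfolding c2 by simp
  qed
  have np: "norm p \<le> norm v / 2"
  proof -
    have "norm p ^ 2 \<le> (norm v / 2) ^ 2" using pp a2 by (simp add: power_divide)
    then show ?thesis using nv by (meson abs_le_square_iff abs_norm_cancel le_divide_eq_numeral1(1) norm_ge_zero order.trans power2_le_imp_le zero_le_divide_iff zero_le_numeral)
  qed
  have nq: "norm q \<le> norm w / 2"
  proof -
    have "norm q ^ 2 \<le> (norm w / 2) ^ 2" using qq b2 by (simp add: power_divide)
    then show ?thesis using nv by (meson abs_le_square_iff abs_norm_cancel le_divide_eq_numeral1(1) norm_ge_zero order.trans power2_le_imp_le zero_le_divide_iff zero_le_numeral)
  qed
  have pq: "p \<bullet> q \<ge> - (norm v * norm w / 4)"
  proof -
    have "\<bar>p \<bullet> q\<bar> \<le> norm p * norm q" by (rule Cauchy_Schwarz_ineq2)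
    also have "\<dots> \<le> (norm v / 2) * (norm w / 2)" using np nq by (intro mult_mono) auto
    finally show ?thesis by simp
  qed
  have ab: "a * b \<ge> 3/4 * (norm v * norm w)"
  proof -
    have "(c * norm v) * (c * norm w) \<le> a * b" proof (rule mult_mono)
      show "0 \<le> a" using av c0 nv(1) by (smt (verit) mult_nonneg_nonneg)
    qed (use av bw c0 in auto)
    moreover have "(c * norm v) * (c * norm w) = (c*c) * (norm v * norm w)" by simp
    ultimately show ?thesis unfolding c2 by simp
  qed
  show ?thesis using vw pq ab by linarith
qed

lemma cone_at_inner:
  assumes "is_rotation \<rho>" "y \<in> cone_at \<rho> x" "z \<in> cone_at \<rho> x"
  shows "norm (y - x) * norm (z - x) \<le> 2 * inner (y - x) (z - x)"
proof -
  obtain v w where v: "v \<in> cone_star" "y = x + \<rho> v" and w: "w \<in> cone_star" "z = x + \<rho> w"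
    using assms(2,3) unfolding cone_at_def by auto
  have ot: "orthogonal_transformation \<rho>" using assms(1) unfolding is_rotation_def by auto
  have "norm (\<rho> v) = norm v" "norm (\<rho> w) = norm w" "\<rho> v \<bullet> \<rho> w = v \<bullet> w"
    using ot unfolding orthogonal_transformation_def by (auto simp: norm_eq_sqrt_inner)
  then show ?thesis using v w cone_inner[OF v(1) w(1)] by simp
qed

lemma cone_closer:
  assumes "is_rotation \<rho>" "y \<in> cone_at \<rho> x" "z \<in> cone_at \<rho> x" "z \<noteq> x"
    "dist x z < dist x y"
  shows "dist y z < dist y x"
proof -
  define A where "A = y - x"
  define B where "B = z - x"
  have i: "norm A * norm B \<le> 2 * inner A B" using cone_at_inner[OF assms(1-3)] unfolding A_def B_def .
  have yz: "y - z = A - B" unfolding A_def B_def by simp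
  have nb: "norm B > 0" using assms(4) unfolding B_def by simp
  have lt: "norm B < norm A" using assms(5) unfolding A_def B_def by (simp add: dist_norm norm_minus_commute)
  have "norm (A - B) ^ 2 = norm A ^ 2 + norm B ^ 2 - 2 * inner A B"
    by (simp add: power2_norm_eq_inner inner_diff_left inner_diff_right inner_commute)
  also have "\<dots> \<le> norm A ^ 2 - norm B * (norm A - norm B)" using i by (simp add: power2_eq_square algebra_simps)
  also have "\<dots> < norm A ^ 2" using nb lt by simp
  finally have "norm (A - B) < norm A" by (simp add: power_less_imp_less_base)
  moreover have "dist y z = norm (A - B)" "dist y x = norm A" unfolding A_def B_def by (auto simp: dist_norm)
  ultimately show ?thesis by simp
qed


lemma lf_finite_ball:
  assumes "locally_finite_set X" "Y \<subseteq> X"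
  shows "finite {z \<in> Y - A. dist a z < r}" "finite {z \<in> Y - A. dist a z \<le> r}"
proof -
  have f: "finite (X \<inter> cball a r)" using assms(1) unfolding locally_finite_set_def by auto
  show "finite {z \<in> Y - A. dist a z < r}"
    by (rule finite_subset[OF _ f]) (use assms(2) in auto)
  show "finite {z \<in> Y - A. dist a z \<le> r}"
    by (rule finite_subset[OF _ f]) (use assms(2) in auto)
qed

lemma apex_in_cone: "is_rotation \<rho> \<Longrightarrow> x \<in> cone_at \<rho> x"
  unfolding cone_at_def cone_star_def is_rotation_def orthogonal_transformation_def
  by (auto intro!: image_eqI[where x=0] simp: linear_0)

lemma far_not_adj:
  fixes rho :: "nat \<Rightarrow> real^'n \<Rightarrow> real^'n"
  assumes lf: "locally_finite_set X"
    and rot: "\<forall>i\<in>{1..N}. is_rotation (rho i)"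
    and cov: "\<forall>y. (\<Union>i\<in>{1..N}. cone_at (rho i) y) = UNIV"
    and cnt: "\<forall>i\<in>{1..N}. k + 1 \<le> card (X \<inter> cball x r \<inter> cone_at (rho i) x)"
    and YX: "Y \<subseteq> X"
    and clos: "\<forall>z\<in>X. dist x z < dist x y \<longrightarrow> z \<in> Y"
    and far: "r < dist x y"
  shows "\<not> knn_adj k Y x y"
proof -
  obtain i where i: "i \<in> {1..N}" "y \<in> cone_at (rho i) x" using cov by blast
  define Q where "Q = X \<inter> cball x r \<inter> cone_at (rho i) x"
  define P where "P = Q - {x}"
  have kQ: "k + 1 \<le> card Q" using cnt i unfolding Q_def by auto
  have fQ: "finite Q" using kQ card.infinite by fastforce
  have "card P = card Q - 1 \<or> card P = card Q" unfolding P_def using fQ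
    by (simp add: card_Diff_singleton_if)
  then have kP: "k \<le> card P" using kQ by linarith
  have Pd: "\<And>z. z \<in> P \<Longrightarrow> z \<in> X \<and> z \<noteq> x \<and> dist x z < dist x y \<and> z \<in> cone_at (rho i) x"
    unfolding P_def Q_def using far by auto
  have "\<not> is_knn k Y x y"
  proof
    assume h: "is_knn k Y x y"
    have sub: "P \<subseteq> {z \<in> Y - {x}. dist x z < dist x y}" using Pd clos by auto
    have "card P \<le> card {z \<in> Y - {x}. dist x z < dist x y}"
      by (rule card_mono[OF lf_finite_ball(1)[OF lf YX] sub])
    then show False using h kP unfolding is_knn_def by simp
  qed
  moreover have "\<not> is_knn k Y y x"
  proof
    assume h: "is_knn k Y y x"
    have sub: "P \<subseteq> {z \<in> Y - {y}. dist y z < dist y x}"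
    proof
      fix z assume z: "z \<in> P"
      have "dist y z < dist y x"
        using cone_closer[of "rho i" y x z] rot i Pd[OF z] by auto
      then show "z \<in> {z \<in> Y - {y}. dist y z < dist y x}" using Pd[OF z] clos by auto
    qed
    have "card P \<le> card {z \<in> Y - {y}. dist y z < dist y x}"
      by (rule card_mono[OF lf_finite_ball(1)[OF lf YX] sub])
    then show False using h kP unfolding is_knn_def by simp
  qed
  ultimately show ?thesis unfolding knn_adj_def by auto
qed

lemma cone_bound:
  fixes rho :: "nat \<Rightarrow> real^'n \<Rightarrow> real^'n"
  assumes lf: "locally_finite_set X"
    and inj: "\<forall>a\<in>X. inj_on (dist a) (X - {a})"
    and rot: "is_rotation \<rho>"
    and xX: "x \<in> X"
  shows "finite {y \<in> X. knn_adj k X x y \<and> y \<in> cone_at \<rho> x}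
    \<and> card {y \<in> X. knn_adj k X x y \<and> y \<in> cone_at \<rho> x} \<le> k"
proof -
  define S where "S = {y \<in> X. knn_adj k X x y \<and> y \<in> cone_at \<rho> x}"
  have noT: False if T: "T \<subseteq> S" "card T = k + 1" "finite T" for T
  proof -
    have ne: "T \<noteq> {}" using T by auto
    have "Max (dist x ` T) \<in> dist x ` T" using T(3) ne by (intro Max_in) auto
    then obtain w where w1: "w \<in> T" "dist x w = Max (dist x ` T)" by auto
    have w: "w \<in> T" "\<forall>t\<in>T. dist x t \<le> dist x w" using w1 T(3) by auto
    define T' where "T' = T - {w}"
    have cT': "card T' = k" unfolding T'_def using T w by simp
    have injx: "inj_on (dist x) (X - {x})" using inj xX by auto
    have Sd: "\<And>y. y \<in> S \<Longrightarrow> y \<in> X \<and> y \<noteq> x \<and> y \<in> cone_at \<rho> x"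
      unfolding S_def knn_adj_def by auto
    have T'd: "\<And>t. t \<in> T' \<Longrightarrow> t \<in> X \<and> t \<noteq> x \<and> t \<in> cone_at \<rho> x \<and> dist x t < dist x w"
    proof -
      fix t assume t: "t \<in> T'"
      have tw: "t \<noteq> w" "t \<in> T" using t unfolding T'_def by auto
      have tX: "t \<in> X - {x}" using Sd tw T(1) by auto
      have wX: "w \<in> X - {x}" using Sd w(1) T(1) by auto
      have "dist x t \<noteq> dist x w"
        using inj_onD[OF injx _ tX wX] tw(1) by auto
      then show "t \<in> X \<and> t \<noteq> x \<and> t \<in> cone_at \<rho> x \<and> dist x t < dist x w"
        using w(2) tw Sd T(1) tX by (auto simp: order_less_le)
    qed
    have wS: "w \<in> S" using w T by auto
    then have "is_knn k X x w \<or> is_knn k X w x" unfolding S_def knn_adj_def by auto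
    then show False
    proof
      assume h: "is_knn k X x w"
      have sub: "T' \<subseteq> {z \<in> X - {x}. dist x z < dist x w}" using T'd by auto
      have "card T' \<le> card {z \<in> X - {x}. dist x z < dist x w}"
        by (rule card_mono[OF lf_finite_ball(1)[OF lf subset_refl] sub])
      then show False using h cT' unfolding is_knn_def by simp
    next
      assume h: "is_knn k X w x"
      have sub: "T' \<subseteq> {z \<in> X - {w}. dist w z < dist w x}"
      proof
        fix z assume z: "z \<in> T'"
        have "dist w z < dist w x"
          using cone_closer[of \<rho> w x z] rot T'd[OF z] Sd[OF wS] by auto
        then show "z \<in> {z \<in> X - {w}. dist w z < dist w x}" using T'd[OF z] by auto
      qed
      have "card T' \<le> card {z \<in> X - {w}. dist w z < dist w x}"
        by (rule card_mono[OF lf_finite_ball(1)[OF lf subset_refl] sub])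
      then show False using h cT' unfolding is_knn_def by simp
    qed
  qed
  have "finite S \<and> card S \<le> k"
  proof (rule ccontr)
    assume "\<not> (finite S \<and> card S \<le> k)"
    then consider "infinite S" | "k + 1 \<le> card S" by force
    then show False
    proof cases
      case 1 then show False using infinite_arbitrarily_large[of S "k+1"] noT by blast
    next
      case 2 then show False using obtain_subset_with_card_n[of "k+1" S] noT by blast
    qed
  qed
  then show ?thesis unfolding S_def .
qed


lemma rank_lemma:
  fixes f :: "'a \<Rightarrow> real"
  assumes "finite B" "k \<le> card B"
  shows "k \<le> card {y\<in>B. card {z\<in>B. f z < f y} < k}"
proof (rule ccontr)
  define L where "L = {y\<in>B. card {z\<in>B. f z < f y} < k}"
  assume "\<not> k \<le> card {y\<in>B. card {z\<in>B. f z < f y} < k}"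
  then have cL: "card L < k" unfolding L_def by simp
  define U where "U = B - L"
  have LB: "L \<subseteq> B" unfolding L_def by auto
  have "U \<noteq> {}"
  proof
    assume "U = {}"
    then have "B = L" using LB unfolding U_def by auto
    then show False using cL assms by simp
  qed
  have fU: "finite U" using assms(1) unfolding U_def by auto
  have "Min (f ` U) \<in> f ` U" using fU \<open>U \<noteq> {}\<close> by (intro Min_in) auto
  then obtain u where u1: "u \<in> U" "f u = Min (f ` U)" by auto
  have umin: "\<forall>t\<in>U. f u \<le> f t" using u1 fU by auto
  have "{z\<in>B. f z < f u} \<subseteq> L" using umin unfolding U_def by force
  then have "card {z\<in>B. f z < f u} \<le> card L" using assms(1) LB by (intro card_mono) (auto intro: finite_subset)
  then have "u \<in> L" using cL u1 unfolding U_def L_def by auto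
  then show False using u1 unfolding U_def by auto
qed

lemma lower_bound:
  fixes X :: "(real^'n) set"
  assumes lf: "locally_finite_set X" and k: "k \<ge> 1" and xX: "x \<in> X"
    and big: "infinite X \<or> k < card X"
  shows "\<exists>L. L \<subseteq> {y \<in> X. knn_adj k X x y} \<and> finite L \<and> k \<le> card L"
proof -
  have "\<exists>F. F \<subseteq> X - {x} \<and> card F = k \<and> finite F"
  proof (cases "finite X")
    case True
    then have "k \<le> card (X - {x})" using big xX by (simp add: card_Diff_singleton)
    then show ?thesis using obtain_subset_with_card_n by metis
  next
    case False
    then have "infinite (X - {x})" by simp
    then show ?thesis using infinite_arbitrarily_large by blast
  qed
  then obtain F where F: "F \<subseteq> X - {x}" "card F = k" "finite F" by blast
  have Fne: "F \<noteq> {}" using F k by auto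
  define \<rho> where "\<rho> = Max (dist x ` F)"
  define B where "B = {z \<in> X - {x}. dist x z \<le> \<rho>}"
  have fB: "finite B" unfolding B_def by (rule lf_finite_ball(2)[OF lf subset_refl])
  have FB: "F \<subseteq> B" unfolding B_def \<rho>_def using F by auto
  have kB: "k \<le> card B" using card_mono[OF fB FB] F by simp
  define L where "L = {y\<in>B. card {z\<in>B. dist x z < dist x y} < k}"
  have kL: "k \<le> card L" unfolding L_def by (rule rank_lemma[OF fB kB])
  have "L \<subseteq> {y \<in> X. knn_adj k X x y}"
  proof
    fix y assume y: "y \<in> L"
    then have yB: "y \<in> B" unfolding L_def by auto
    have "{z \<in> X - {x}. dist x z < dist x y} = {z\<in>B. dist x z < dist x y}"
      using yB unfolding B_def by auto
    then have "is_knn k X x y" using y yB xX unfolding L_def B_def is_knn_def by auto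
    then show "y \<in> {y \<in> X. knn_adj k X x y}" unfolding knn_adj_def is_knn_def by auto
  qed
  moreover have "finite L" using fB unfolding L_def by auto
  ultimately show ?thesis using kL by blast
qed


lemma eq_part:
  fixes rho :: "nat \<Rightarrow> real^'n \<Rightarrow> real^'n"
  assumes lf: "locally_finite_set X"
    and rot: "\<forall>i\<in>{1..N}. is_rotation (rho i)"
    and cov: "\<forall>y. (\<Union>i\<in>{1..N}. cone_at (rho i) y) = UNIV"
    and xX: "x \<in> X"
  shows "{y \<in> X. knn_adj k X x y} = {y \<in> X \<inter> ecball x (knn_R k N rho X x). knn_adj k (X \<inter> ecball x (knn_R k N rho X x)) x y}"
proof -
  define S where "S = {ereal r | r. r > 0 \<and>
      (\<forall>i\<in>{1..N}. k + 1 \<le> card (X \<inter> cball x r \<inter> cone_at (rho i) x))}"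
  define I where "I = Inf S"
  define Y where "Y = X \<inter> ecball x (2 * I)"
  have R: "knn_R k N rho X x = 2 * I" unfolding knn_R_def I_def S_def by simp
  have YX: "Y \<subseteq> X" unfolding Y_def by auto
  have "(y \<in> X \<and> knn_adj k X x y) \<longleftrightarrow> (y \<in> Y \<and> knn_adj k Y x y)" for y
  proof (cases "ereal (dist x y) \<le> I")
    case True
    define d where "d = dist x y"
    have "2 * ereal d \<le> 2 * I" using True unfolding d_def by (intro ereal_mult_left_mono) auto
    then have d2: "ereal (2 * d) \<le> 2 * I" by simp
    have d0: "0 \<le> d" unfolding d_def by simp
    have inY: "z \<in> Y" if "z \<in> X" "dist x z \<le> 2 * d" for z
    proof -
      have "ereal (dist x z) \<le> ereal (2 * d)" using that by simp
      then have "ereal (dist x z) \<le> 2 * I" using d2 by (rule order.trans)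
      then show ?thesis using that unfolding Y_def ecball_def by auto
    qed
    have xY: "x \<in> Y" using inY[OF xX] d0 by simp
    have e1: "{z \<in> Y - {x}. dist x z < dist x y} = {z \<in> X - {x}. dist x z < dist x y}"
    proof -
      have "z \<in> Y" if "z \<in> X" "dist x z < dist x y" for z
        using inY[OF that(1)] that(2) d0 unfolding d_def by simp
      then show ?thesis using YX by blast
    qed
    have e2: "{z \<in> Y - {y}. dist y z < dist y x} = {z \<in> X - {y}. dist y z < dist y x}"
    proof -
      have "dist x z \<le> 2 * d" if "dist y z < dist y x" for z
        using dist_triangle[of x z y] that unfolding d_def by (simp add: dist_commute)
      then show ?thesis using inY YX by blast
    qed
    show ?thesis
    proof (cases "y \<in> X")
      case True
      then have yY: "y \<in> Y" using inY d0 unfolding d_def by simp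
      show ?thesis using yY True xY xX e1 e2 unfolding knn_adj_def is_knn_def by auto
    next
      case False then show ?thesis using YX by auto
    qed
  next
    case False
    then have "I < ereal (dist x y)" by simp
    then obtain s where s: "s \<in> S" "s < ereal (dist x y)" unfolding I_def by (auto simp: Inf_less_iff)
    then obtain r where r: "s = ereal r" "\<forall>i\<in>{1..N}. k + 1 \<le> card (X \<inter> cball x r \<inter> cone_at (rho i) x)"
      unfolding S_def by auto
    have rd: "r < dist x y" using s r by simp
    have n1: "\<not> knn_adj k X x y"
      by (rule far_not_adj[OF lf rot cov r(2) subset_refl _ rd]) auto
    have n2: "\<not> knn_adj k Y x y" if yY: "y \<in> Y"
    proof (rule far_not_adj[OF lf rot cov r(2) YX _ rd])
      show "\<forall>z\<in>X. dist x z < dist x y \<longrightarrow> z \<in> Y"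
      proof (intro ballI impI)
        fix z assume z: "z \<in> X" "dist x z < dist x y"
        have "ereal (dist x z) \<le> ereal (dist x y)" using z by simp
        also have "\<dots> \<le> 2 * I" using yY unfolding Y_def ecball_def by auto
        finally show "z \<in> Y" using z unfolding Y_def ecball_def by auto
      qed
    qed
    show ?thesis using n1 n2 by auto
  qed
  then show ?thesis unfolding R Y_def[symmetric] by auto
qed


theorem lemma8p2:
  fixes k N :: nat and rho :: "nat \<Rightarrow> real^'n \<Rightarrow> real^'n"
    and X :: "(real^'n) set" and x :: "real^'n"
  assumes "k \<ge> 1"
    and "locally_finite_set X"
    and "\<forall>a\<in>X. inj_on (dist a) (X - {a})"
    and "\<forall>i\<in>{1..N}. is_rotation (rho i)"
    and "\<forall>y. (\<Union>i\<in>{1..N}. cone_at (rho i) y) = UNIV"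
    and "x \<in> X"
    and "infinite X \<or> k < card X"
  shows "knn_deg k X x = knn_deg k (X \<inter> ecball x (knn_R k N rho X x)) x
    \<and> k \<le> knn_deg k X x \<and> knn_deg k X x \<le> k * N"
proof -
  define Nb where "Nb = {y \<in> X. knn_adj k X x y}"
  define Si where "Si = (\<lambda>i. {y \<in> X. knn_adj k X x y \<and> y \<in> cone_at (rho i) x})"
  have Si: "finite (Si i) \<and> card (Si i) \<le> k" if "i \<in> {1..N}" for i
    unfolding Si_def using cone_bound[OF assms(2,3) _ assms(6)] assms(4) that by blast
  have sub: "Nb \<subseteq> (\<Union>i\<in>{1..N}. Si i)"
  proof
    fix y assume "y \<in> Nb"
    moreover obtain i where "i \<in> {1..N}" "y \<in> cone_at (rho i) x" using assms(5) by blast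
    ultimately show "y \<in> (\<Union>i\<in>{1..N}. Si i)" unfolding Nb_def Si_def by auto
  qed
  have fU: "finite (\<Union>i\<in>{1..N}. Si i)" using Si by auto
  have fNb: "finite Nb" using finite_subset[OF sub fU] .
  have "card Nb \<le> card (\<Union>i\<in>{1..N}. Si i)" by (rule card_mono[OF fU sub])
  also have "\<dots> \<le> (\<Sum>i\<in>{1..N}. card (Si i))" by (rule card_UN_le) simp
  also have "\<dots> \<le> (\<Sum>i\<in>{1..N}. k)" using Si by (intro sum_mono) auto
  also have "\<dots> = k * N" by simp
  finally have up: "card Nb \<le> k * N" .
  obtain L where L: "L \<subseteq> Nb" "finite L" "k \<le> card L"
    using lower_bound[OF assms(2,1,6,7)] unfolding Nb_def by blast
  have lo: "k \<le> card Nb" using card_mono[OF fNb L(1)] L(3) by simp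
  have eq: "knn_deg k X x = knn_deg k (X \<inter> ecball x (knn_R k N rho X x)) x"
    unfolding knn_deg_def using eq_part[OF assms(2,4,5,6), of k] by simp
  show ?thesis using eq up lo unfolding knn_deg_def Nb_def by simp
qed

end
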